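(* Let $A\in\mathbb{C}^{m\times n}$ have rank $r$ and satisfy $\mathrm{rank}(A^{\sim}AA^{\sim})=\mathrm{rank}(A)$. Then there exists a unique matrix $X\in\mathbb{C}^{n\times n}$ such that $AX=0$, $X^{\sim}=X$, $X^2=X$, $\mathrm{rank}(X)=n-r$; there exists a unique matrix $Y\in\mathbb{C}^{m\times m}$ such that $YA=0$, $Y^{\sim}=Y$, $Y^2=Y$, $\mathrm{rank}(Y)=m-r$; and, for these $X,Y$, there exists a unique matrix $Z\in\mathbb{C}^{n\times m}$ such that $$\mathrm{rank}\begin{pmatrix}A&I_m-Y\\ I_n-X&Z\end{pmatrix}=\mathrm{rank}(A).$$ Furthermore, $X=I_n-A^{\mathfrak{m}}A$, $Y=I_m-AA^{\mathfrak{m}}$ and $Z=A^{\mathfrak{m}}$.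
   Context: For a positive integer $k$, the Minkowski metric matrix of order $k$ is $G_k=\mathrm{diag}(1,-I_{k-1})$ (with $G_1=(1)$). For $M\in\mathbb{C}^{p\times q}$, the Minkowski adjoint is $M^{\sim}=G_qM^*G_p$, where $M^*$ is the conjugate transpose. The Minkowski inverse of $A\in\mathbb{C}^{m\times n}$, denoted $A^{\mathfrak{m}}$, is the (unique) matrix $W\in\mathbb{C}^{n\times m}$ with $AWA=A$, $WAW=W$, $(AW)^{\sim}=AW$, $(WA)^{\sim}=WA$, when it exists. *)

theory Defs
  imports "Jordan_Normal_Form.DL_Rank"
begin

definition crank :: "complex mat \<Rightarrow> nat" where
  "crank M = vec_space.rank (dim_row M) (M :: complex mat)"

definition minkowski_G :: "nat \<Rightarrow> complex mat" where
  "minkowski_G k = mat k k (\<lambda>(i,j). if i = j then (if i = 0 then 1 else -1) else 0)"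

definition ctrans :: "complex mat \<Rightarrow> complex mat" where
  "ctrans M = mat (dim_col M) (dim_row M) (\<lambda>(i,j). cnj (M $$ (j,i)))"

definition mink_adj :: "complex mat \<Rightarrow> complex mat" where
  "mink_adj M = minkowski_G (dim_col M) * ctrans M * minkowski_G (dim_row M)"

definition is_minkowski_inverse :: "complex mat \<Rightarrow> complex mat \<Rightarrow> bool" where
  "is_minkowski_inverse A W \<longleftrightarrow>
     W \<in> carrier_mat (dim_col A) (dim_row A) \<and>
     A * W * A = A \<and> W * A * W = W \<and>
     mink_adj (A * W) = A * W \<and> mink_adj (W * A) = W * A"

definition minkowski_inverse :: "complex mat \<Rightarrow> complex mat" where
  "minkowski_inverse A = (THE W. is_minkowski_inverse A W)"

end

theory Submission
  imports Defs
begin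

definition inj_mat :: "'a::field mat \<Rightarrow> bool" where
 "inj_mat C \<longleftrightarrow> (\<forall>x \<in> carrier_vec (dim_col C). C *\<^sub>v x = 0\<^sub>v (dim_row C) \<longrightarrow> x = 0\<^sub>v (dim_col C))"

lemma mult_unit_vec_col: fixes A :: "'a::field mat" assumes "A \<in> carrier_mat m n" "i < n"
  shows "A *\<^sub>v unit_vec n i = col A i"
proof (rule eq_vecI)
  fix j assume "j < dim_vec (col A i)"
  then have j: "j < m" using assms by simp
  have "(A *\<^sub>v unit_vec n i) $ j = row A j \<bullet> unit_vec n i" using j assms by simp
  also have "\<dots> = row A j $ i" using scalar_prod_right_unit[OF assms(2)] by blast
  finally show "(A *\<^sub>v unit_vec n i) $ j = col A i $ j" using j assms by simp
qed (use assms in simp)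

lemma inj_mat_distinct:
  fixes X :: "'a::field mat"
  assumes X: "X \<in> carrier_mat k s" and inj: "inj_mat X" shows "distinct (cols X)"
proof -
  { fix i j assume ij: "i < s" "j < s" "i \<noteq> j" "col X i = col X j"
    let ?x = "unit_vec s i - unit_vec s j :: 'a vec"
    have xc: "?x \<in> carrier_vec s" by simp
    have "X *\<^sub>v ?x = X *\<^sub>v unit_vec s i - X *\<^sub>v unit_vec s j"
      using mult_minus_distrib_mat_vec[OF X] by simp
    also have "\<dots> = 0\<^sub>v k" using ij X by (simp add: mult_unit_vec_col)
    finally have x0: "X *\<^sub>v ?x = 0\<^sub>v k" .
    have inj': "\<forall>x\<in>carrier_vec s. X *\<^sub>v x = 0\<^sub>v k \<longrightarrow> x = 0\<^sub>v s" using inj X unfolding inj_mat_def by auto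
    have "?x = 0\<^sub>v s" using inj'[rule_format, OF xc x0] .
    moreover have "?x $ i = 1" using ij by simp
    ultimately have False using ij by simp
  }
  then show ?thesis unfolding distinct_conv_nth using X by auto
qed

lemma inj_mat_le:
  fixes X :: "'a::field mat"
  assumes X: "X \<in> carrier_mat k s" and inj: "inj_mat X" shows "s \<le> k"
proof -
  interpret vk: vec_space "TYPE('a)" k .
  have li: "vk.lin_indpt (set (cols X))"
  proof (rule ccontr)
    assume "\<not> vk.lin_indpt (set (cols X))"
    then obtain v where "v \<in> carrier_vec s" "v \<noteq> 0\<^sub>v s" "X *\<^sub>v v = 0\<^sub>v k"
      using vk.lin_depE[OF X _ inj_mat_distinct[OF X inj]] by blast
    then show False using inj X unfolding inj_mat_def by auto
  qed
  have sub: "set (cols X) \<subseteq> carrier_vec k" using X cols_dim by blast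
  have "card (set (cols X)) \<le> vk.dim" using vk.li_le_dim(2)[OF vk.fin_dim sub li] by simp
  moreover have "card (set (cols X)) = s" using distinct_card[OF inj_mat_distinct[OF X inj]] X by simp
  ultimately show ?thesis using vk.dim_is_n by simp
qed

lemma rank_factor:
  fixes M :: "'a::field mat"
  assumes M: "M \<in> carrier_mat m n"
  shows "\<exists>C G F. C \<in> carrier_mat m (vec_space.rank m M) \<and> G \<in> carrier_mat n (vec_space.rank m M)
     \<and> F \<in> carrier_mat (vec_space.rank m M) n \<and> C = M * G \<and> M = C * F \<and> inj_mat C"
proof -
  interpret vm: vec_space "TYPE('a)" m .
  obtain S where maxS: "maximal S (\<lambda>T. T \<subseteq> set (cols M) \<and> vm.lin_indpt T)"
    using maximal_exists[of "(\<lambda>T. T \<subseteq> set (cols M) \<and> vm.lin_indpt T)" "card (set (cols M))" "{}"]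
    by (meson List.finite_set card_mono empty_iff empty_subsetI vm.finite_lin_indpt2 rev_finite_subset)
  have rk: "vm.rank M = card S" using vm.rank_card_indpt[OF M maxS] .
  have SM: "S \<subseteq> set (cols M)" and liS: "vm.lin_indpt S" using maxS unfolding maximal_def by auto
  have colsM: "set (cols M) \<subseteq> carrier_vec m" using M cols_dim by blast
  have Sc: "S \<subseteq> carrier_vec m" using SM colsM by blast
  have finS: "finite S" using SM finite_subset by blast
  obtain cs where cs: "set cs = S" "distinct cs" using finite_distinct_list[OF finS] by blast
  define k where "k = length cs"
  have k: "vm.rank M = k" unfolding rk k_def using cs distinct_card by metis
  define C where "C = mat_of_cols m cs"
  have C: "C \<in> carrier_mat m k" unfolding C_def k_def by simp
  have colsC: "cols C = cs" unfolding C_def using cs Sc by simp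
  have injC: "inj_mat C"
    unfolding inj_mat_def
  proof (intro ballI impI)
    fix x assume x: "x \<in> carrier_vec (dim_col C)" and Cx: "C *\<^sub>v x = 0\<^sub>v (dim_row C)"
    show "x = 0\<^sub>v (dim_col C)"
    proof (rule ccontr)
      assume "x \<noteq> 0\<^sub>v (dim_col C)"
      then have "vm.lin_dep (set (cols C))"
        using vm.lin_depI[OF C _ _ _] x Cx C colsC cs by auto
      then show False using liS colsC cs by simp
    qed
  qed
  have "\<forall>i<k. \<exists>j<n. cs ! i = col M j"
  proof (intro allI impI)
    fix i assume "i < k"
    then have "cs ! i \<in> set (cols M)" using SM cs k_def nth_mem by blast
    then show "\<exists>j<n. cs ! i = col M j" using M by (metis cols_length cols_nth in_set_conv_nth carrier_matD(2))
  qed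
  then obtain idx where idx: "\<And>i. i < k \<Longrightarrow> idx i < n \<and> cs ! i = col M (idx i)" by metis
  define G where "G = mat_of_cols n (map (\<lambda>i. unit_vec n (idx i) :: 'a vec) [0..<k])"
  have G: "G \<in> carrier_mat n k" unfolding G_def by (metis length_map length_upt mat_of_cols_carrier(1) minus_nat.diff_0)
  have CMG: "C = M * G"
  proof (rule mat_col_eqI)
    fix i assume "i < dim_col (M * G)"
    then have i: "i < k" using G by simp
    have "col (M * G) i = M *\<^sub>v col G i" using col_mult2[OF M G i] .
    also have "col G i = unit_vec n (idx i)" unfolding G_def using i by simp
    also have "M *\<^sub>v unit_vec n (idx i) = col M (idx i)" using mult_unit_vec_col[OF M] idx i by blast
    also have "\<dots> = col C i" using idx[OF i] colsC C i by (metis cols_nth carrier_matD(2))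
    finally show "col C i = col (M * G) i" by simp
  qed (use C G M in auto)
  have "\<forall>j<n. \<exists>f \<in> carrier_vec k. col M j = C *\<^sub>v f"
  proof (intro allI impI)
    fix j assume j: "j < n"
    let ?v = "col M j"
    have vc: "?v \<in> carrier_vec m" using M j by simp
    have vM: "?v \<in> set (cols M)" using M j by (metis cols_length cols_nth nth_mem carrier_matD(2))
    have "?v \<in> vm.span S"
    proof (rule ccontr)
      assume nv: "?v \<notin> vm.span S"
      then have "?v \<notin> S" using vm.in_own_span Sc by blast
      then have "vm.lin_indpt (S \<union> {?v})" using vm.lin_dep_iff_in_span[OF Sc liS vc] nv by simp
      moreover have "S \<union> {?v} \<subseteq> set (cols M)" using SM vM by blast
      ultimately have "S \<union> {?v} = S" using maxS unfolding maximal_def by blast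
      then show False using \<open>?v \<notin> S\<close> by blast
    qed
    then have "?v \<in> vm.span_list cs" using vm.span_list_as_span[of cs] cs Sc by simp
    then obtain c where "?v = vm.lincomb_list c cs" unfolding vm.span_list_def by blast
    also have "\<dots> = mat_of_cols m cs *\<^sub>v vec (length cs) c"
      by (rule vm.lincomb_list_as_mat_mult) (use cs Sc in auto)
    finally show "\<exists>f \<in> carrier_vec k. col M j = C *\<^sub>v f" unfolding C_def k_def by auto
  qed
  then obtain f where f: "\<And>j. j < n \<Longrightarrow> f j \<in> carrier_vec k \<and> col M j = C *\<^sub>v f j" by metis
  define F where "F = mat_of_cols k (map f [0..<n])"
  have F: "F \<in> carrier_mat k n" unfolding F_def by (metis length_map length_upt mat_of_cols_carrier(1) minus_nat.diff_0)
  have MCF: "M = C * F"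
  proof (rule mat_col_eqI)
    fix j assume "j < dim_col (C * F)"
    then have j: "j < n" using F by simp
    have "col (C * F) j = C *\<^sub>v col F j" using col_mult2[OF C F j] .
    also have "col F j = f j" unfolding F_def using j f by simp
    finally show "col M j = col (C * F) j" using f j by simp
  qed (use C F M in auto)
  show ?thesis unfolding k using C G F CMG MCF injC by blast
qed

lemma lin_indpt_inj_mat:
  fixes K :: "'a::field mat"
  assumes K: "K \<in> carrier_mat m s" and d: "distinct (cols K)"
    and li: "\<not> LinearCombinations.module.lin_dep class_ring (module_vec TYPE('a) m) (set (cols K))"
  shows "inj_mat K"
  unfolding inj_mat_def
proof (intro ballI impI)
  interpret vm: vec_space "TYPE('a)" m .
  fix x assume x: "x \<in> carrier_vec (dim_col K)" and Kx: "K *\<^sub>v x = 0\<^sub>v (dim_row K)"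
  show "x = 0\<^sub>v (dim_col K)"
  proof (rule ccontr)
    assume "x \<noteq> 0\<^sub>v (dim_col K)"
    then have "vm.lin_dep (set (cols K))"
      using vm.lin_depI[OF K _ _ _ d] x Kx K by auto
    then show False using li by simp
  qed
qed

lemma span_as_mult:
  fixes v :: "'a::field vec"
  assumes "v \<in> LinearCombinations.module.span class_ring (module_vec TYPE('a) m) (set cs)" "set cs \<subseteq> carrier_vec m"
  shows "\<exists>f \<in> carrier_vec (length cs). v = mat_of_cols m cs *\<^sub>v f"
proof -
  interpret vm: vec_space "TYPE('a)" m .
  have "v \<in> vm.span_list cs" using vm.span_list_as_span[of cs] assms by simp
  then obtain c where "v = vm.lincomb_list c cs" unfolding vm.span_list_def by blast
  also have "\<dots> = mat_of_cols m cs *\<^sub>v vec (length cs) c"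
    by (rule vm.lincomb_list_as_mat_mult) (use assms in auto)
  finally show ?thesis by auto
qed

lemma mult_mat_vec_zero[simp]:
  fixes A :: "'a::field mat"
  assumes "A \<in> carrier_mat m k" shows "A *\<^sub>v 0\<^sub>v k = 0\<^sub>v m"
  by (rule eq_vecI) (use assms in \<open>auto simp: scalar_prod_def\<close>)

lemma inj_mat_mult_right:
  fixes A B :: "'a::field mat"
  assumes A: "A \<in> carrier_mat m k" and B: "B \<in> carrier_mat k s" and inj: "inj_mat (A * B)"
  shows "inj_mat B"
  unfolding inj_mat_def
proof (intro ballI impI)
  fix x assume x: "x \<in> carrier_vec (dim_col B)" and Bx: "B *\<^sub>v x = 0\<^sub>v (dim_row B)"
  have "(A * B) *\<^sub>v x = A *\<^sub>v (B *\<^sub>v x)" using A B x by (simp add: assoc_mult_mat_vec)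
  also have "\<dots> = 0\<^sub>v m" using Bx A B by simp
  finally show "x = 0\<^sub>v (dim_col B)" using inj x A B unfolding inj_mat_def by auto
qed

lemma rank_le_factor:
  fixes M :: "'a::field mat"
  assumes C: "C \<in> carrier_mat m k" and F: "F \<in> carrier_mat k n" and MCF: "M = C * F"
  shows "vec_space.rank m M \<le> k"
proof -
  have M: "M \<in> carrier_mat m n" using C F MCF by simp
  obtain C' G F' where C': "C' \<in> carrier_mat m (vec_space.rank m M)" and G: "G \<in> carrier_mat n (vec_space.rank m M)"
    and CMG: "C' = M * G" and inj: "inj_mat C'"
    using rank_factor[OF M] by blast
  have "C' = C * (F * G)" using CMG MCF C F G by (simp add: assoc_mult_mat)
  then have "inj_mat (F * G)" using inj_mat_mult_right[OF C _] inj F G by (metis mult_carrier_mat)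
  then show ?thesis using inj_mat_le[of "F * G"] F G by simp
qed

lemma rank_mult_left:
  fixes P Q :: "'a::field mat"
  assumes P: "P \<in> carrier_mat m k" and Q: "Q \<in> carrier_mat k n"
  shows "vec_space.rank m (P * Q) \<le> vec_space.rank m P"
proof -
  obtain C F where C: "C \<in> carrier_mat m (vec_space.rank m P)" and F: "F \<in> carrier_mat (vec_space.rank m P) k"
    and PCF: "P = C * F"
    using rank_factor[OF P] by blast
  have "P * Q = C * (F * Q)" using PCF C F Q by (simp add: assoc_mult_mat)
  then show ?thesis using rank_le_factor[OF C _] F Q by (metis mult_carrier_mat)
qed

lemma rank_mult_right:
  fixes P Q :: "'a::field mat"
  assumes P: "P \<in> carrier_mat m k" and Q: "Q \<in> carrier_mat k n"
  shows "vec_space.rank m (P * Q) \<le> vec_space.rank k Q"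
proof -
  obtain C F where C: "C \<in> carrier_mat k (vec_space.rank k Q)" and F: "F \<in> carrier_mat (vec_space.rank k Q) n"
    and QCF: "Q = C * F"
    using rank_factor[OF Q] by blast
  have "P * Q = (P * C) * F" using QCF C F P by (simp add: assoc_mult_mat)
  then show ?thesis using rank_le_factor[OF _ F] P C by (metis mult_carrier_mat)
qed

lemma rank_lower:
  fixes K M :: "'a::field mat"
  assumes K: "K \<in> carrier_mat m s" and inj: "inj_mat K" and M: "M \<in> carrier_mat m n"
    and H: "H \<in> carrier_mat n s" and KMH: "K = M * H"
  shows "s \<le> vec_space.rank m M"
proof -
  obtain C F where C: "C \<in> carrier_mat m (vec_space.rank m M)" and F: "F \<in> carrier_mat (vec_space.rank m M) n"
    and MCF: "M = C * F"
    using rank_factor[OF M] by blast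
  have "K = C * (F * H)" using KMH MCF C F H by (simp add: assoc_mult_mat)
  then have "inj_mat (F * H)" using inj_mat_mult_right[OF C _] inj F H by (metis mult_carrier_mat)
  then show ?thesis using inj_mat_le[of "F * H"] F H by simp
qed

lemma inj_mat_lin_indpt:
  fixes X :: "'a::field mat"
  assumes X: "X \<in> carrier_mat k s" and inj: "inj_mat X"
  shows "\<not> LinearCombinations.module.lin_dep class_ring (module_vec TYPE('a) k) (set (cols X))"
proof
  interpret vk: vec_space "TYPE('a)" k .
  assume "vk.lin_dep (set (cols X))"
  then obtain v where "v \<in> carrier_vec s" "v \<noteq> 0\<^sub>v s" "X *\<^sub>v v = 0\<^sub>v k"
    using vk.lin_depE[OF X _ inj_mat_distinct[OF X inj]] by blast
  then show False using inj X unfolding inj_mat_def by auto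
qed

lemma rank_range_eq:
  fixes M N X :: "'a::field mat"
  assumes M: "M \<in> carrier_mat m n" and X: "X \<in> carrier_mat n p" and NMX: "N = M * X"
    and le: "vec_space.rank m M \<le> vec_space.rank m N"
  shows "\<exists>Y \<in> carrier_mat p n. M = N * Y"
proof -
  interpret vm: vec_space "TYPE('a)" m .
  have N: "N \<in> carrier_mat m p" using M X NMX by simp
  define k where "k = vm.rank N"
  obtain C G F where C: "C \<in> carrier_mat m k" and G: "G \<in> carrier_mat p k"
     and CNG: "C = N * G" and injC: "inj_mat C"
    using rank_factor[OF N] unfolding k_def by blast
  have "\<forall>j<n. \<exists>f \<in> carrier_vec k. col M j = C *\<^sub>v f"
  proof (intro allI impI)
    fix j assume j: "j < n"
    let ?b = "col M j"
    show "\<exists>f \<in> carrier_vec k. col M j = C *\<^sub>v f"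
    proof (rule ccontr)
      assume nf: "\<not> (\<exists>f \<in> carrier_vec k. col M j = C *\<^sub>v f)"
      define cs where "cs = cols C"
      have csc: "set cs \<subseteq> carrier_vec m" unfolding cs_def using C cols_dim by blast
      have Ccs: "mat_of_cols m cs = C" unfolding cs_def using C mat_of_cols_cols[of C] by simp
      have lcs: "length cs = k" unfolding cs_def using C by simp
      have bc: "?b \<in> carrier_vec m" using M j by simp
      have nspan: "?b \<notin> vm.span (set cs)"
      proof
        assume "?b \<in> vm.span (set cs)"
        then obtain f where "f \<in> carrier_vec (length cs)" "?b = mat_of_cols m cs *\<^sub>v f"
          using span_as_mult[of ?b m cs] csc by blast
        then show False using nf Ccs lcs by auto
      qed
      have dcs: "distinct cs" unfolding cs_def by (rule inj_mat_distinct[OF C injC])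
      have lics: "vm.lin_indpt (set cs)" unfolding cs_def by (rule inj_mat_lin_indpt[OF C injC])
      have bnot: "?b \<notin> set cs" using nspan vm.in_own_span csc by blast
      have li2: "vm.lin_indpt (set cs \<union> {?b})" using vm.lin_dep_iff_in_span[OF csc lics bc bnot] nspan by simp
      define K where "K = mat_of_cols m (cs @ [?b])"
      have K: "K \<in> carrier_mat m (k+1)" unfolding K_def using mat_of_cols_carrier(1)[of m "cs @ [?b]"] lcs by simp
      have colsK: "cols K = cs @ [?b]" unfolding K_def using csc bc by simp
      have injK: "inj_mat K"
        by (rule lin_indpt_inj_mat[OF K]) (use colsK dcs bnot li2 in auto)
      define H where "H = mat_of_cols n (cols (X * G) @ [unit_vec n j])"
      have H: "H \<in> carrier_mat n (k+1)" unfolding H_def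
        using mat_of_cols_carrier(1)[of n "cols (X * G) @ [unit_vec n j]"] X G by simp
      have colsXG: "set (cols (X * G)) \<subseteq> carrier_vec n" using cols_dim[of "X * G"] X by simp
      have KMH: "K = M * H"
      proof (rule mat_col_eqI)
        fix i assume "i < dim_col (M * H)"
        then have i: "i < k + 1" using H by simp
        have "col (M * H) i = M *\<^sub>v col H i" using col_mult2[OF M H i] .
        show "col K i = col (M * H) i"
        proof (cases "i < k")
          case True
          have "col H i = col (X * G) i" unfolding H_def using True colsXG X G
            by (simp add: nth_append)
          then have "col (M * H) i = M *\<^sub>v col (X * G) i" using col_mult2[OF M H i] by simp
          also have "\<dots> = col (M * (X * G)) i" using col_mult2[OF M _ True] X G by simp
          also have "M * (X * G) = C" using CNG NMX M X G by simp
          also have "col C i = col K i"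
          proof -
            have "col K i = (cs @ [?b]) ! i" using colsK cols_nth[of i K] K i by simp
            also have "\<dots> = cs ! i" using True lcs by (simp add: nth_append)
            also have "\<dots> = col C i" unfolding cs_def using True C by simp
            finally show ?thesis by simp
          qed
          finally show ?thesis by simp
        next
          case False
          then have ik: "i = k" using i by simp
          have "col H i = unit_vec n j" unfolding H_def using ik X G by (simp add: nth_append)
          then have "col (M * H) i = col M j" using col_mult2[OF M H i] mult_unit_vec_col[OF M j] by simp
          also have "\<dots> = col K i"
          proof -
            have "col K i = (cs @ [?b]) ! i" using colsK cols_nth[of i K] K i by simp
            also have "\<dots> = ?b" using ik lcs nth_append_length[of cs ?b] by simp
            finally show ?thesis by simp
          qed
          finally show ?thesis by simp
        qed
      qed (use K H M in auto)
      have "k + 1 \<le> vm.rank M" by (rule rank_lower[OF K injK M H KMH])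
      then show False using le unfolding k_def by simp
    qed
  qed
  then obtain f where f: "\<And>j. j < n \<Longrightarrow> f j \<in> carrier_vec k \<and> col M j = C *\<^sub>v f j" by metis
  define F' where "F' = mat_of_cols k (map f [0..<n])"
  have F': "F' \<in> carrier_mat k n" unfolding F'_def by (metis length_map length_upt mat_of_cols_carrier(1) minus_nat.diff_0)
  have MCF: "M = C * F'"
  proof (rule mat_col_eqI)
    fix j assume "j < dim_col (C * F')"
    then have j: "j < n" using F' by simp
    have "col (C * F') j = C *\<^sub>v col F' j" using col_mult2[OF C F' j] .
    also have "col F' j = f j" unfolding F'_def using j f by simp
    finally show "col M j = col (C * F') j" using f j by simp
  qed (use C F' M in auto)
  have "M = N * (G * F')" using MCF CNG N G F' by simp
  moreover have "G * F' \<in> carrier_mat p n" using G F' by simp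
  ultimately show ?thesis by blast
qed

lemma G_carrier[simp]: "minkowski_G k \<in> carrier_mat k k"
  unfolding minkowski_G_def by simp

lemma G_dims[simp]: "dim_row (minkowski_G k) = k" "dim_col (minkowski_G k) = k"
  unfolding minkowski_G_def by auto

lemma G_index: "i < k \<Longrightarrow> j < k \<Longrightarrow> minkowski_G k $$ (i,j) = (if i = j then (if i = 0 then 1 else -1) else 0)"
  unfolding minkowski_G_def by simp

lemma G_G[simp]: "minkowski_G k * minkowski_G k = 1\<^sub>m k"
proof (rule eq_matI)
  fix i j assume ij: "i < dim_row (1\<^sub>m k)" "j < dim_col (1\<^sub>m k)"
  then have i: "i < k" and j: "j < k" by auto
  have "(minkowski_G k * minkowski_G k) $$ (i,j) = (\<Sum>l<k. minkowski_G k $$ (i,l) * minkowski_G k $$ (l,j))"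
    using i j by (simp add: scalar_prod_def lessThan_atLeast0)
  also have "\<dots> = (\<Sum>l<k. (if l = i then (if i = 0 then 1 else -1) * minkowski_G k $$ (i,j) else 0))"
    by (rule sum.cong) (use i in \<open>auto simp: G_index\<close>)
  also have "\<dots> = (if i = 0 then 1 else -1) * minkowski_G k $$ (i,j)"
    using i by simp
  also have "\<dots> = 1\<^sub>m k $$ (i,j)" using i j by (simp add: G_index)
  finally show "(minkowski_G k * minkowski_G k) $$ (i,j) = 1\<^sub>m k $$ (i,j)" .
qed auto

lemma ctrans_carrier[simp]: "M \<in> carrier_mat m n \<Longrightarrow> ctrans M \<in> carrier_mat n m"
  unfolding ctrans_def by auto

lemma ctrans_dims[simp]: "dim_row (ctrans M) = dim_col M" "dim_col (ctrans M) = dim_row M"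
  unfolding ctrans_def by auto

lemma ctrans_index[simp]: "i < dim_col M \<Longrightarrow> j < dim_row M \<Longrightarrow> ctrans M $$ (i,j) = cnj (M $$ (j,i))"
  unfolding ctrans_def by auto

lemma ctrans_ctrans[simp]: "ctrans (ctrans M) = M"
  by (rule eq_matI) auto

lemma ctrans_G[simp]: "ctrans (minkowski_G k) = minkowski_G k"
  by (rule eq_matI) (auto simp: G_index)

lemma ctrans_one[simp]: "ctrans (1\<^sub>m k) = 1\<^sub>m k"
  by (rule eq_matI) auto

lemma ctrans_zero[simp]: "ctrans (0\<^sub>m m n) = 0\<^sub>m n m"
  by (rule eq_matI) auto

lemma ctrans_minus: "A \<in> carrier_mat m n \<Longrightarrow> B \<in> carrier_mat m n \<Longrightarrow> ctrans (A - B) = ctrans A - ctrans B"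
  by (rule eq_matI) auto

lemma ctrans_mult: assumes A: "A \<in> carrier_mat m k" and B: "B \<in> carrier_mat k n"
  shows "ctrans (A * B) = ctrans B * ctrans A"
proof (rule eq_matI)
  fix i j assume "i < dim_row (ctrans B * ctrans A)" "j < dim_col (ctrans B * ctrans A)"
  then have i: "i < n" and j: "j < m" using A B by auto
  have "ctrans (A * B) $$ (i,j) = cnj (\<Sum>l<k. A $$ (j,l) * B $$ (l,i))"
    using A B i j by (simp add: scalar_prod_def lessThan_atLeast0)
  also have "\<dots> = (\<Sum>l<k. cnj (B $$ (l,i)) * cnj (A $$ (j,l)))"
    by (simp add: cnj_sum mult.commute)
  also have "\<dots> = (ctrans B * ctrans A) $$ (i,j)"
    using A B i j by (simp add: scalar_prod_def lessThan_atLeast0)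
  finally show "ctrans (A * B) $$ (i,j) = (ctrans B * ctrans A) $$ (i,j)" .
qed (use A B in auto)

lemma crank_le_factor:
  assumes C: "C \<in> carrier_mat m k" and F: "F \<in> carrier_mat k n" and MCF: "M = C * F"
  shows "crank M \<le> k"
proof -
  have "dim_row M = m" using C MCF by simp
  then show ?thesis using rank_le_factor[OF C F MCF] unfolding crank_def by simp
qed

lemma crank_ctrans_le: assumes M: "M \<in> carrier_mat m n" shows "crank (ctrans M) \<le> crank M"
proof -
  obtain C F where C: "C \<in> carrier_mat m (crank M)" and F: "F \<in> carrier_mat (crank M) n"
    and MCF: "M = C * F"
  proof -
    have cr: "crank M = vec_space.rank m M" using M unfolding crank_def by simp
    show ?thesis using rank_factor[OF M] that unfolding cr[symmetric] by blast
  qed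
  have "ctrans M = ctrans F * ctrans C" using MCF ctrans_mult[OF C F] by simp
  then show ?thesis using crank_le_factor[of "ctrans F" n "crank M" "ctrans C" m] C F by simp
qed

lemma crank_ctrans: assumes M: "M \<in> carrier_mat m n" shows "crank (ctrans M) = crank M"
  using crank_ctrans_le[OF M] crank_ctrans_le[of "ctrans M" n m] M by fastforce

lemma crank_mult_left: assumes "P \<in> carrier_mat m k" "Q \<in> carrier_mat k n" shows "crank (P * Q) \<le> crank P"
proof -
  have "dim_row (P * Q) = m" "dim_row P = m" using assms by auto
  then show ?thesis unfolding crank_def using rank_mult_left[OF assms] by simp
qed

lemma crank_mult_right: assumes "P \<in> carrier_mat m k" "Q \<in> carrier_mat k n" shows "crank (P * Q) \<le> crank Q"
proof -
  have "dim_row (P * Q) = m" "dim_row Q = k" using assms by auto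
  then show ?thesis unfolding crank_def using rank_mult_right[OF assms] by simp
qed

lemma adj_carrier[simp]: "M \<in> carrier_mat m n \<Longrightarrow> mink_adj M \<in> carrier_mat n m"
  unfolding mink_adj_def by auto

lemma assoc_dims: fixes A :: "'a::semiring_0 mat"
  shows "dim_col A = dim_row B \<Longrightarrow> dim_col B = dim_row C \<Longrightarrow> A * B * C = A * (B * C)"
  by (rule assoc_mult_mat[of A "dim_row A" "dim_col A" B "dim_col B" C "dim_col C"]) auto

lemma minus_mult_dims: fixes A :: "'a::ring mat"
  assumes "dim_row A = dim_row B" "dim_col A = dim_col B" "dim_col A = dim_row C"
  shows "(A - B) * C = A * C - B * C"
proof (rule minus_mult_distrib_mat)
  show "A \<in> carrier_mat (dim_row A) (dim_col A)" by simp
  show "B \<in> carrier_mat (dim_row A) (dim_col A)" by (rule carrier_matI[OF assms(1)[symmetric] assms(2)[symmetric]])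
  show "C \<in> carrier_mat (dim_col A) (dim_col C)" by (rule carrier_matI[OF assms(3)[symmetric] refl])
qed

lemma mult_minus_dims: fixes A :: "'a::ring mat"
  assumes "dim_col A = dim_row B" "dim_row B = dim_row C" "dim_col B = dim_col C"
  shows "A * (B - C) = A * B - A * C"
proof (rule mult_minus_distrib_mat)
  show "A \<in> carrier_mat (dim_row A) (dim_col A)" by simp
  show "B \<in> carrier_mat (dim_col A) (dim_col B)" by (rule carrier_matI[OF assms(1)[symmetric] refl])
  have "dim_row C = dim_col A" by (simp only: assms(1) assms(2))
  then show "C \<in> carrier_mat (dim_col A) (dim_col B)" by (rule carrier_matI[OF _ assms(3)[symmetric]])
qed

lemma mult_eq_ext: fixes P :: "'a::semiring_0 mat"
  shows "P * Q = R \<Longrightarrow> dim_col P = dim_row Q \<Longrightarrow> dim_col Q = dim_row X \<Longrightarrow> P * (Q * X) = R * X"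
  using assoc_dims[of P Q X] by simp

lemma G_G_ext: "dim_row X = k \<Longrightarrow> minkowski_G k * (minkowski_G k * X) = X"
  using assoc_dims[of "minkowski_G k" "minkowski_G k" X] by simp

lemma mink_adj_alt: "mink_adj M = minkowski_G (dim_col M) * (ctrans M * minkowski_G (dim_row M))"
  unfolding mink_adj_def by (simp add: assoc_dims)

lemma adj_dims[simp]: "dim_row (mink_adj M) = dim_col M" "dim_col (mink_adj M) = dim_row M"
  unfolding mink_adj_def by auto

lemma ctrans_mult_dims: assumes "dim_col A = dim_row B" shows "ctrans (A * B) = ctrans B * ctrans A"
proof -
  have A: "A \<in> carrier_mat (dim_row A) (dim_col A)" by auto
  have B: "B \<in> carrier_mat (dim_col A) (dim_col B)" by (rule carrier_matI[OF assms[symmetric] refl])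
  show ?thesis by (rule ctrans_mult[OF A B])
qed

lemma adj_adj[simp]: "mink_adj (mink_adj M) = M"
  unfolding mink_adj_alt by (simp add: ctrans_mult_dims assoc_dims G_G_ext)

lemma adj_mult: "dim_col A = dim_row B \<Longrightarrow> mink_adj (A * B) = mink_adj B * mink_adj A"
  unfolding mink_adj_alt by (simp add: ctrans_mult_dims assoc_dims G_G_ext)

lemma adj_minus: assumes A: "A \<in> carrier_mat m n" and B: "B \<in> carrier_mat m n"
  shows "mink_adj (A - B) = mink_adj A - mink_adj B"
proof -
  have "mink_adj (A - B) = minkowski_G n * ((ctrans A - ctrans B) * minkowski_G m)"
    unfolding mink_adj_alt using A B by (simp add: ctrans_minus)
  also have "\<dots> = minkowski_G n * (ctrans A * minkowski_G m) - minkowski_G n * (ctrans B * minkowski_G m)"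
    using A B by (simp add: minus_mult_dims mult_minus_dims)
  also have "\<dots> = mink_adj A - mink_adj B" unfolding mink_adj_alt using A B by simp
  finally show ?thesis .
qed

lemma adj_one[simp]: "mink_adj (1\<^sub>m k) = 1\<^sub>m k"
  unfolding mink_adj_def by simp

lemma crank_adj: assumes M: "M \<in> carrier_mat m n" shows "crank (mink_adj M) = crank M"
proof -
  have le: "crank (mink_adj X) \<le> crank X" if X: "X \<in> carrier_mat p q" for X p q
  proof -
    have "crank (mink_adj X) = crank (minkowski_G q * (ctrans X * minkowski_G p))"
      unfolding mink_adj_def using X by (simp add: assoc_mult_mat[of _ q q _ p _ p])
    also have "\<dots> \<le> crank (ctrans X * minkowski_G p)" using X by (intro crank_mult_right) auto
    also have "\<dots> \<le> crank (ctrans X)" using X by (intro crank_mult_left) auto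
    also have "\<dots> = crank X" using crank_ctrans[OF X] .
    finally show ?thesis .
  qed
  show ?thesis using le[OF M] le[of "mink_adj M" n m] M by fastforce
qed

lemma ext_right: fixes L :: "'a::semiring_0 mat"
  shows "L = R \<Longrightarrow> L * Z = R * Z" by simp

lemma mink_inv_exists:
  assumes A: "A \<in> carrier_mat m n"
    and rk: "crank (mink_adj A * A * mink_adj A) = crank A"
  shows "\<exists>W. is_minkowski_inverse A W"
proof -
  define B where "B = mink_adj A"
  have B: "B \<in> carrier_mat n m" unfolding B_def using A by simp
  have adjB: "mink_adj B = A" unfolding B_def by simp
  note dA[simp] = carrier_matD[OF A] and dB[simp] = carrier_matD[OF B]
  have crB: "crank B = crank A" unfolding B_def by (rule crank_adj[OF A])
  have crA: "crank A = vec_space.rank m A" unfolding crank_def by simp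
  have crB': "crank B = vec_space.rank n B" unfolding crank_def by simp
  have NBAB: "B * A * B = B * (A * B)" by (simp add: assoc_dims)
  have crN: "crank (B * (A * B)) = vec_space.rank n (B * (A * B))" unfolding crank_def by simp
  obtain U where U: "U \<in> carrier_mat m m" and e1: "B = B * (A * B) * U"
    using rank_range_eq[OF B _ refl, of "A * B"] A B rk crB crN crB' NBAB unfolding B_def[symmetric]
    by (metis mult_carrier_mat order_refl)
  have adjABA: "mink_adj (A * (B * A)) = B * (A * B)"
    by (simp add: adj_mult adjB B_def[symmetric] assoc_dims)
  have crABA: "crank (A * (B * A)) = crank A"
  proof -
    have "crank (A * (B * A)) = crank (mink_adj (A * (B * A)))"
      using crank_adj[of "A * (B * A)" m n] A B by simp
    also have "\<dots> = crank A" using adjABA rk NBAB unfolding B_def by simp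
    finally show ?thesis .
  qed
  have crABA': "crank (A * (B * A)) = vec_space.rank m (A * (B * A))" unfolding crank_def by simp
  obtain S where S: "S \<in> carrier_mat n n" and e2: "A = A * (B * A) * S"
    using rank_range_eq[OF A _ refl, of "B * A"] A B crABA crABA' crA
    by (metis mult_carrier_mat order_refl)
  note dU[simp] = carrier_matD[OF U] and dS[simp] = carrier_matD[OF S]
  define Ua where "Ua = mink_adj U"
  define Sa where "Sa = mink_adj S"
  have dUa[simp]: "dim_row Ua = m" "dim_col Ua = m" unfolding Ua_def by simp_all
  have dSa[simp]: "dim_row Sa = n" "dim_col Sa = n" unfolding Sa_def by simp_all
  have adjUa: "mink_adj Ua = U" unfolding Ua_def by simp
  have adjSa: "mink_adj Sa = S" unfolding Sa_def by simp
  have k1: "B * (A * (B * U)) = B" using e1 by (simp add: assoc_dims)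
  have k2: "A * (B * (A * S)) = A" using e2 by (simp add: assoc_dims)
  have k3: "Ua * (A * (B * A)) = A"
  proof -
    have "mink_adj (B * (A * (B * U))) = Ua * (A * (B * A))"
      by (simp add: adj_mult adjB B_def[symmetric] Ua_def assoc_dims)
    then show ?thesis using k1 adjB by simp
  qed
  have k4: "Sa * (B * (A * B)) = B"
  proof -
    have "mink_adj (A * (B * (A * S))) = Sa * (B * (A * B))"
      by (simp add: adj_mult adjB B_def[symmetric] Sa_def assoc_dims)
    then show ?thesis using k2 B_def by simp
  qed
  have k1x: "B * (A * (B * (U * Z))) = B * Z" if "dim_row Z = m" for Z
    using ext_right[OF k1, of Z] that by (simp add: assoc_dims)
  have k2x: "A * (B * (A * (S * Z))) = A * Z" if "dim_row Z = n" for Z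
    using ext_right[OF k2, of Z] that by (simp add: assoc_dims)
  have k3x: "Ua * (A * (B * (A * Z))) = A * Z" if "dim_row Z = n" for Z
    using ext_right[OF k3, of Z] that by (simp add: assoc_dims)
  have k4x: "Sa * (B * (A * (B * Z))) = B * Z" if "dim_row Z = m" for Z
    using ext_right[OF k4, of Z] that by (simp add: assoc_dims)
  have nkn: "B * (A * (B * (U * (A * (Sa * (B * (A * B))))))) = B * (A * B)"
    by (simp add: k4 k1x)
  have nknx: "B * (A * (B * (U * (A * (Sa * (B * (A * (B * Z)))))))) = B * (A * (B * Z))"
    if "dim_row Z = m" for Z
    using ext_right[OF nkn, of Z] that by (simp add: assoc_dims)
  define W where "W = B * (U * (A * (Sa * B)))"
  have W: "W \<in> carrier_mat n m" unfolding W_def by (simp add: carrier_matI)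
  have dW[simp]: "dim_row W = n" "dim_col W = m" using W by auto
  have P1: "A * (B * (U * (A * (Sa * (B * A))))) = A"
  proof -
    have "A * (B * (U * (A * (Sa * (B * A))))) = Ua * (A * (B * (A * (B * (U * (A * (Sa * (B * A))))))))"
      by (simp add: k3x)
    also have "\<dots> = Ua * (A * (B * (A * (Sa * (B * A)))))" by (simp add: k1x)
    also have "\<dots> = Ua * (A * (B * (A * (Sa * (B * (A * (B * (A * S))))))))" by (simp add: k2)
    also have "\<dots> = Ua * (A * (B * (A * (B * (A * S)))))" by (simp add: k4x)
    also have "\<dots> = A * (B * (A * S))" by (simp add: k3x)
    also have "\<dots> = A" by (simp add: k2)
    finally show ?thesis .
  qed
  have P1x: "A * (B * (U * (A * (Sa * (B * (A * Z)))))) = A * Z" if "dim_row Z = n" for Z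
    using ext_right[OF P1, of Z] that by (simp add: assoc_dims)
  have AWA: "A * W * A = A" unfolding W_def using P1 by (simp add: assoc_dims)
  have WAW: "W * A * W = W"
  proof -
    have "W * A * W = B * (U * (A * (Sa * (B * (A * (B * (U * (A * (Sa * B)))))))))"
      unfolding W_def by (simp add: assoc_dims)
    also have "\<dots> = B * (U * (A * (Sa * (B * (A * (B * (U * (A * (Sa * (B * (A * (B * U))))))))))))"
      by (simp add: k1)
    also have "\<dots> = B * (U * (A * (Sa * (B * (A * (B * U))))))" by (simp add: nknx)
    also have "\<dots> = W" unfolding W_def by (simp add: k1)
    finally show ?thesis .
  qed
  have Q1: "A * W = Ua * (A * B)"
  proof -
    have "A * W = A * (B * (U * (A * (Sa * B))))" unfolding W_def by simp
    also have "\<dots> = Ua * (A * (B * (A * (B * (U * (A * (Sa * B)))))))" by (simp add: k3x)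
    also have "\<dots> = Ua * (A * (B * (A * (B * (U * (A * (Sa * (B * (A * (B * U))))))))))" by (simp add: k1)
    also have "\<dots> = Ua * (A * (B * (A * (B * U))))" by (simp add: nknx)
    also have "\<dots> = Ua * (A * B)" by (simp add: k1)
    finally show ?thesis .
  qed
  have Q2: "A * W = A * (B * U)"
  proof -
    have "A * (B * U) = A * (B * (U * (A * (Sa * (B * (A * (B * U)))))))" by (simp add: P1x)
    also have "\<dots> = A * (B * (U * (A * (Sa * B))))" by (simp add: k1)
    finally show ?thesis unfolding W_def by simp
  qed
  have adjAW: "mink_adj (A * W) = A * W"
  proof -
    have "mink_adj (A * W) = mink_adj (Ua * (A * B))" using Q1 by simp
    also have "\<dots> = A * (B * U)" by (simp add: adj_mult adjB adjUa B_def[symmetric] assoc_dims)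
    finally show ?thesis using Q2 by simp
  qed
  have R1: "W * A = B * (A * S)"
  proof -
    have "W * A = B * (U * (A * (Sa * (B * A))))" unfolding W_def by (simp add: assoc_dims)
    also have "\<dots> = Sa * (B * (A * (B * (U * (A * (Sa * (B * A)))))))" by (simp add: k4x)
    also have "\<dots> = Sa * (B * (A * (B * (U * (A * (Sa * (B * (A * (B * (A * S))))))))))" by (simp add: k2)
    also have "\<dots> = Sa * (B * (A * (B * (A * S))))" by (simp add: nknx)
    also have "\<dots> = B * (A * S)" by (simp add: k4x)
    finally show ?thesis .
  qed
  have R2: "W * A = Sa * (B * A)"
  proof -
    have "Sa * (B * A) = Sa * (B * (A * (B * (U * (A * (Sa * (B * A)))))))" by (simp add: P1)
    also have "\<dots> = B * (U * (A * (Sa * (B * A))))" by (simp add: k4x)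
    finally show ?thesis unfolding W_def by (simp add: assoc_dims)
  qed
  have adjWA: "mink_adj (W * A) = W * A"
  proof -
    have "mink_adj (W * A) = mink_adj (B * (A * S))" using R1 by simp
    also have "\<dots> = Sa * (B * A)" by (simp add: adj_mult adjB B_def[symmetric] Sa_def assoc_dims)
    finally show ?thesis using R2 by simp
  qed
  have "is_minkowski_inverse A W"
    unfolding is_minkowski_inverse_def using W AWA WAW adjAW adjWA by simp
  then show ?thesis by blast
qed

lemma mink_inv_unique:
  assumes A: "A \<in> carrier_mat m n" and h1: "is_minkowski_inverse A W1" and h2: "is_minkowski_inverse A W2"
  shows "W1 = W2"
proof -
  have W1: "W1 \<in> carrier_mat n m" and a1: "A * W1 * A = A" and b1: "W1 * A * W1 = W1"
    and c1: "mink_adj (A * W1) = A * W1" and d1: "mink_adj (W1 * A) = W1 * A"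
    using h1 A unfolding is_minkowski_inverse_def by auto
  have W2: "W2 \<in> carrier_mat n m" and a2: "A * W2 * A = A" and b2: "W2 * A * W2 = W2"
    and c2: "mink_adj (A * W2) = A * W2" and d2: "mink_adj (W2 * A) = W2 * A"
    using h2 A unfolding is_minkowski_inverse_def by auto
  note [simp] = carrier_matD[OF A] carrier_matD[OF W1] carrier_matD[OF W2]
  have AW1: "A * W1 = (A * W1) * (A * W2)"
  proof -
    have "A * W1 = (A * W2) * (A * W1)" using a1 a2 by (metis assoc_dims carrier_matD(1,2) index_mult_mat(2,3) A W1 W2)
    then have "mink_adj (A * W1) = mink_adj ((A * W2) * (A * W1))" by simp
    also have "\<dots> = (A * W1) * (A * W2)" using c1 c2 by (simp add: adj_mult)
    finally show ?thesis using c1 by simp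
  qed
  have e1: "W1 = W1 * (A * W2)"
  proof -
    have "W1 = W1 * (A * W1)" using b1 by (simp add: assoc_dims)
    also have "\<dots> = W1 * ((A * W1) * (A * W2))" using AW1 by simp
    also have "\<dots> = (W1 * A * W1) * (A * W2)" by (simp add: assoc_dims)
    also have "\<dots> = W1 * (A * W2)" using b1 by simp
    finally show ?thesis .
  qed
  have W2A: "W2 * A = (W1 * A) * (W2 * A)"
  proof -
    have "W2 * A = (W2 * A) * (W1 * A)"
    proof -
      have "(W2 * A) * (W1 * A) = W2 * (A * W1 * A)" by (simp add: assoc_dims)
      then show ?thesis using a1 by simp
    qed
    then have "mink_adj (W2 * A) = mink_adj ((W2 * A) * (W1 * A))" by simp
    also have "\<dots> = (W1 * A) * (W2 * A)" using d1 d2 by (simp add: adj_mult)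
    finally show ?thesis using d2 by simp
  qed
  have e2: "W2 = W1 * (A * W2)"
  proof -
    have "W2 = (W2 * A) * W2" using b2 by simp
    also have "\<dots> = ((W1 * A) * (W2 * A)) * W2" using W2A by simp
    also have "\<dots> = W1 * (A * (W2 * A * W2))" by (simp add: assoc_dims)
    also have "\<dots> = W1 * (A * W2)" using b2 by simp
    finally show ?thesis .
  qed
  show ?thesis using e1 e2 by simp
qed

lemma mink_inv_props:
  assumes A: "A \<in> carrier_mat m n"
    and rk: "crank (mink_adj A * A * mink_adj A) = crank A"
  shows "is_minkowski_inverse A (minkowski_inverse A)"
proof -
  obtain W where W: "is_minkowski_inverse A W" using mink_inv_exists[OF A rk] by blast
  have "\<exists>!W. is_minkowski_inverse A W" using W mink_inv_unique[OF A] by blast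
  then show ?thesis unfolding minkowski_inverse_def by (rule theI')
qed

lemma idem_compl: fixes P :: "complex mat"
  assumes P: "P \<in> carrier_mat n n" and PP: "P * P = P"
  shows "(1\<^sub>m n - P) * (1\<^sub>m n - P) = 1\<^sub>m n - P"
proof -
  note [simp] = carrier_matD[OF P]
  have "(1\<^sub>m n - P) * (1\<^sub>m n - P) = 1\<^sub>m n * (1\<^sub>m n - P) - P * (1\<^sub>m n - P)"
    by (simp add: minus_mult_dims)
  also have "\<dots> = (1\<^sub>m n - P) - (P * 1\<^sub>m n - P * P)" by (simp add: mult_minus_dims)
  also have "\<dots> = (1\<^sub>m n - P) - (P - P)" using PP by simp
  also have "\<dots> = 1\<^sub>m n - P" by (rule eq_matI) auto
  finally show ?thesis .
qed

lemma inj_one: "inj_mat (1\<^sub>m n :: complex mat)"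
  unfolding inj_mat_def by auto

lemma crank_one: "crank (1\<^sub>m n :: complex mat) = n"
proof -
  have "n \<le> vec_space.rank n (1\<^sub>m n :: complex mat)"
    by (rule rank_lower[OF one_carrier_mat inj_one one_carrier_mat one_carrier_mat]) simp
  moreover have "vec_space.rank n (1\<^sub>m n :: complex mat) \<le> n" by (rule vec_space.rank_le_nc) simp
  ultimately show ?thesis unfolding crank_def by simp
qed

lemma minus_zero_mat'[simp]: "X \<in> carrier_mat n m \<Longrightarrow> X - 0\<^sub>m n m = (X :: 'a::group_add mat)"
  by (rule eq_matI) auto

lemma zero_append_vec: "0\<^sub>v (a + b) = (0\<^sub>v a :: 'a::zero vec) @\<^sub>v 0\<^sub>v b"
  by (rule eq_vecI) auto

lemma zero_mat_mult_vec[simp]: "d \<in> carrier_vec k \<Longrightarrow> 0\<^sub>m n k *\<^sub>v d = (0\<^sub>v n :: 'a::field vec)"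
  by (rule eq_vecI) (auto simp: scalar_prod_def)

lemma idem_crank:
  fixes P :: "complex mat"
  assumes P: "P \<in> carrier_mat n n" and PP: "P * P = P"
  shows "crank P + crank (1\<^sub>m n - P) = n"
proof (rule antisym)
  note [simp] = carrier_matD[OF P]
  define Q where "Q = 1\<^sub>m n - P"
  have Q: "Q \<in> carrier_mat n n" unfolding Q_def using minus_carrier_mat[OF P] .
  have crP: "crank P = vec_space.rank n P" unfolding crank_def by simp
  have crQ: "crank Q = vec_space.rank n Q" unfolding crank_def using Q by simp
  obtain C1 G1 where C1: "C1 \<in> carrier_mat n (crank P)" and G1: "G1 \<in> carrier_mat n (crank P)"
    and C1PG: "C1 = P * G1" and inj1: "inj_mat C1"
    using rank_factor[OF P] unfolding crP by blast
  obtain C2 G2 where C2: "C2 \<in> carrier_mat n (crank Q)" and G2: "G2 \<in> carrier_mat n (crank Q)"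
    and C2QG: "C2 = Q * G2" and inj2: "inj_mat C2"
    using rank_factor[OF Q] unfolding crQ by blast
  define k1 where "k1 = crank P"
  define k2 where "k2 = crank Q"
  note C1' = C1[folded k1_def] and C2' = C2[folded k2_def]
  have PC1: "P * C1 = C1" unfolding C1PG using assoc_mult_mat[OF P P G1] PP by simp
  have PQ: "P * Q = 0\<^sub>m n n"
  proof -
    have "P * Q = P * 1\<^sub>m n - P * P" unfolding Q_def by (simp add: mult_minus_dims)
    also have "\<dots> = 0\<^sub>m n n" using PP by (intro eq_matI) auto
    finally show ?thesis .
  qed
  have PC2: "P * C2 = 0\<^sub>m n (crank Q)"
  proof -
    have "P * C2 = (P * Q) * G2" unfolding C2QG using assoc_mult_mat[OF P Q G2] by simp
    also have "\<dots> = 0\<^sub>m n (crank Q)" using PQ G2 by simp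
    finally show ?thesis .
  qed
  define K where "K = four_block_mat C1 C2 (0\<^sub>m 0 k1) (0\<^sub>m 0 k2)"
  have K: "K \<in> carrier_mat (n + 0) (k1 + k2)" unfolding K_def by (rule four_block_carrier_mat[OF C1']) simp
  have injK: "inj_mat K"
    unfolding inj_mat_def
  proof (intro ballI impI)
    fix x assume x: "x \<in> carrier_vec (dim_col K)" and Kx: "K *\<^sub>v x = 0\<^sub>v (dim_row K)"
    have xc: "x \<in> carrier_vec (k1 + k2)" using x K by simp
    define a where "a = vec_first x k1"
    define d where "d = vec_last x k2"
    have a: "a \<in> carrier_vec k1" and d: "d \<in> carrier_vec k2" unfolding a_def d_def by simp_all
    have xad: "x = a @\<^sub>v d" unfolding a_def d_def using xc by simp
    have "K *\<^sub>v x = (C1 *\<^sub>v a + C2 *\<^sub>v d) @\<^sub>v (0\<^sub>m 0 k1 *\<^sub>v a + 0\<^sub>m 0 k2 *\<^sub>v d)"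
      unfolding K_def xad by (rule four_block_mat_mult_vec[OF C1' C2' _ _ a d]) auto
    moreover have "K *\<^sub>v x = 0\<^sub>v n @\<^sub>v 0\<^sub>v 0" using Kx K zero_append_vec[of n 0] by simp
    ultimately have s0: "C1 *\<^sub>v a + C2 *\<^sub>v d = 0\<^sub>v n"
    proof -
      have cv: "C1 *\<^sub>v a + C2 *\<^sub>v d \<in> carrier_vec n" using C1' C2' a d by simp
      assume "K *\<^sub>v x = (C1 *\<^sub>v a + C2 *\<^sub>v d) @\<^sub>v (0\<^sub>m 0 k1 *\<^sub>v a + 0\<^sub>m 0 k2 *\<^sub>v d)"
        "K *\<^sub>v x = 0\<^sub>v n @\<^sub>v 0\<^sub>v 0"
      then have "(C1 *\<^sub>v a + C2 *\<^sub>v d) @\<^sub>v (0\<^sub>m 0 k1 *\<^sub>v a + 0\<^sub>m 0 k2 *\<^sub>v d) = 0\<^sub>v n @\<^sub>v 0\<^sub>v 0" by simp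
      then show ?thesis using append_vec_eq[OF cv, of "0\<^sub>v n"] by simp
    qed
    have "P *\<^sub>v (C1 *\<^sub>v a + C2 *\<^sub>v d) = (P * C1) *\<^sub>v a + (P * C2) *\<^sub>v d"
      using P C1' C2' a d by (simp add: mult_add_distrib_mat_vec assoc_mult_mat_vec)
    also have "\<dots> = C1 *\<^sub>v a"
    proof -
      have "C1 *\<^sub>v a \<in> carrier_vec n" using C1' a by simp
      then show ?thesis using PC1 PC2 d unfolding k2_def by simp
    qed
    finally have "C1 *\<^sub>v a = 0\<^sub>v n" using s0 P by simp
    then have a0: "a = 0\<^sub>v k1" using inj1 a C1' unfolding inj_mat_def by auto
    then have "C2 *\<^sub>v d = 0\<^sub>v n" using s0 C1' C2' d by simp
    then have d0: "d = 0\<^sub>v k2" using inj2 d C2' unfolding inj_mat_def by auto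
    show "x = 0\<^sub>v (dim_col K)" using xad a0 d0 K zero_append_vec[of k1 k2, symmetric] by simp
  qed
  have "k1 + k2 \<le> n + 0" by (rule inj_mat_le[OF K injK])
  then show "crank P + crank (1\<^sub>m n - P) \<le> n" unfolding k1_def k2_def Q_def by simp
next
  note [simp] = carrier_matD[OF P]
  have "P + (1\<^sub>m n - P) = 1\<^sub>m n" by (rule eq_matI) auto
  then have "vec_space.rank n (1\<^sub>m n :: complex mat) \<le> vec_space.rank n P + vec_space.rank n (1\<^sub>m n - P)"
    using vec_space.rank_subadditive[OF P minus_carrier_mat[OF P, of "1\<^sub>m n"]] by simp
  then show "n \<le> crank P + crank (1\<^sub>m n - P)" using crank_one[of n] unfolding crank_def by simp
qed

lemma X_part:
  assumes A: "A \<in> carrier_mat m n" and W: "is_minkowski_inverse A W"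
  shows "1\<^sub>m n - W * A \<in> carrier_mat n n \<and> A * (1\<^sub>m n - W * A) = 0\<^sub>m m n
     \<and> mink_adj (1\<^sub>m n - W * A) = 1\<^sub>m n - W * A
     \<and> (1\<^sub>m n - W * A) * (1\<^sub>m n - W * A) = 1\<^sub>m n - W * A
     \<and> crank (1\<^sub>m n - W * A) = n - crank A
     \<and> (\<forall>X. X \<in> carrier_mat n n \<and> A * X = 0\<^sub>m m n \<and> mink_adj X = X \<and> X * X = X
           \<and> crank X = n - crank A \<longrightarrow> X = 1\<^sub>m n - W * A)"
proof -
  have Wc: "W \<in> carrier_mat n m" and AWA: "A * W * A = A" and WAW: "W * A * W = W"
    and adjWA: "mink_adj (W * A) = W * A"
    using W A unfolding is_minkowski_inverse_def by auto
  note [simp] = carrier_matD[OF A] carrier_matD[OF Wc]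
  define P where "P = W * A"
  define X0 where "X0 = 1\<^sub>m n - P"
  have P: "P \<in> carrier_mat n n" unfolding P_def using Wc A by simp
  have X0: "X0 \<in> carrier_mat n n" unfolding X0_def using minus_carrier_mat[OF P] .
  note [simp] = carrier_matD[OF P] carrier_matD[OF X0]
  have PP: "P * P = P"
  proof -
    have "P * P = (W * A * W) * A" unfolding P_def by (simp add: assoc_dims)
    then show ?thesis using WAW unfolding P_def by simp
  qed
  have AP: "A * P = A" unfolding P_def using AWA by (simp add: assoc_dims)
  have crP: "crank P = crank A"
  proof (rule antisym)
    show "crank P \<le> crank A" unfolding P_def by (rule crank_mult_right[OF Wc A])
    have "crank A = crank (A * P)" using AP by simp
    also have "\<dots> \<le> crank P" by (rule crank_mult_right[OF A P])
    finally show "crank A \<le> crank P" .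
  qed
  have crX0: "crank X0 = n - crank A" using idem_crank[OF P PP] crP unfolding X0_def by simp
  have AX0: "A * X0 = 0\<^sub>m m n"
  proof -
    have "A * X0 = A * 1\<^sub>m n - A * P" unfolding X0_def by (simp add: mult_minus_dims)
    also have "\<dots> = 0\<^sub>m m n" using AP A by simp
    finally show ?thesis .
  qed
  have adjX0: "mink_adj X0 = X0"
    unfolding X0_def using adj_minus[OF one_carrier_mat P] adjWA unfolding P_def by simp
  have X0X0: "X0 * X0 = X0" unfolding X0_def by (rule idem_compl[OF P PP])
  have uniq: "X = X0" if X: "X \<in> carrier_mat n n" and AX: "A * X = 0\<^sub>m m n" and adjX: "mink_adj X = X"
    and XX: "X * X = X" and crX: "crank X = n - crank A" for X
  proof -
    note [simp] = carrier_matD[OF X]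
    have X0X: "X0 * X = X"
    proof -
      have "X0 * X = 1\<^sub>m n * X - P * X" unfolding X0_def by (simp add: minus_mult_dims)
      also have "P * X = W * (A * X)" unfolding P_def by (simp add: assoc_dims)
      also have "\<dots> = 0\<^sub>m n n" using AX Wc by simp
      finally show ?thesis using X by simp
    qed
    have XX0: "X * X0 = X"
    proof -
      have "mink_adj (X0 * X) = mink_adj X * mink_adj X0" by (simp add: adj_mult)
      then show ?thesis using X0X adjX adjX0 by simp
    qed
    have "vec_space.rank n X0 \<le> vec_space.rank n X" using crX crX0 unfolding crank_def by simp
    then obtain Y where Y: "Y \<in> carrier_mat n n" and X0XY: "X0 = X * Y"
      using rank_range_eq[OF X0 X X0X[symmetric]] by blast
    have "X * X0 = X0"
    proof -
      have "X * X0 = (X * X) * Y" unfolding X0XY using assoc_mult_mat[OF X X Y] by simp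
      then show ?thesis using XX X0XY by simp
    qed
    then show ?thesis using XX0 by simp
  qed
  show ?thesis using X0 AX0 adjX0 X0X0 crX0 uniq unfolding X0_def P_def by blast
qed

lemma Y_part:
  assumes A: "A \<in> carrier_mat m n" and W: "is_minkowski_inverse A W"
  shows "1\<^sub>m m - A * W \<in> carrier_mat m m \<and> (1\<^sub>m m - A * W) * A = 0\<^sub>m m n
     \<and> mink_adj (1\<^sub>m m - A * W) = 1\<^sub>m m - A * W
     \<and> (1\<^sub>m m - A * W) * (1\<^sub>m m - A * W) = 1\<^sub>m m - A * W
     \<and> crank (1\<^sub>m m - A * W) = m - crank A
     \<and> (\<forall>Y. Y \<in> carrier_mat m m \<and> Y * A = 0\<^sub>m m n \<and> mink_adj Y = Y \<and> Y * Y = Y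
           \<and> crank Y = m - crank A \<longrightarrow> Y = 1\<^sub>m m - A * W)"
proof -
  have Wc: "W \<in> carrier_mat n m" and AWA: "A * W * A = A" and WAW: "W * A * W = W"
    and adjAW: "mink_adj (A * W) = A * W"
    using W A unfolding is_minkowski_inverse_def by auto
  note [simp] = carrier_matD[OF A] carrier_matD[OF Wc]
  define P where "P = A * W"
  define Y0 where "Y0 = 1\<^sub>m m - P"
  have P: "P \<in> carrier_mat m m" unfolding P_def using Wc A by simp
  have Y0: "Y0 \<in> carrier_mat m m" unfolding Y0_def using minus_carrier_mat[OF P] .
  note [simp] = carrier_matD[OF P] carrier_matD[OF Y0]
  have PP: "P * P = P"
  proof -
    have "P * P = (A * W * A) * W" unfolding P_def by (simp add: assoc_dims)
    then show ?thesis using AWA unfolding P_def by simp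
  qed
  have PA: "P * A = A" unfolding P_def using AWA by (simp add: assoc_dims)
  have crP: "crank P = crank A"
  proof (rule antisym)
    show "crank P \<le> crank A" unfolding P_def by (rule crank_mult_left[OF A Wc])
    have "crank A = crank (P * A)" using PA by simp
    also have "\<dots> \<le> crank P" by (rule crank_mult_left[OF P A])
    finally show "crank A \<le> crank P" .
  qed
  have crY0: "crank Y0 = m - crank A" using idem_crank[OF P PP] crP unfolding Y0_def by simp
  have Y0A: "Y0 * A = 0\<^sub>m m n"
  proof -
    have "Y0 * A = 1\<^sub>m m * A - P * A" unfolding Y0_def by (simp add: minus_mult_dims)
    also have "\<dots> = 0\<^sub>m m n" using PA A by simp
    finally show ?thesis .
  qed
  have adjY0: "mink_adj Y0 = Y0"
    unfolding Y0_def using adj_minus[OF one_carrier_mat P] adjAW unfolding P_def by simp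
  have Y0Y0: "Y0 * Y0 = Y0" unfolding Y0_def by (rule idem_compl[OF P PP])
  have uniq: "Y = Y0" if Y: "Y \<in> carrier_mat m m" and YA: "Y * A = 0\<^sub>m m n" and adjY: "mink_adj Y = Y"
    and YY: "Y * Y = Y" and crY: "crank Y = m - crank A" for Y
  proof -
    note [simp] = carrier_matD[OF Y]
    have YY0: "Y * Y0 = Y"
    proof -
      have "Y * Y0 = Y * 1\<^sub>m m - Y * P" unfolding Y0_def by (simp add: mult_minus_dims)
      also have "Y * P = (Y * A) * W" unfolding P_def by (simp add: assoc_dims)
      also have "\<dots> = 0\<^sub>m m m" using YA Wc by simp
      finally show ?thesis using Y by simp
    qed
    have Y0Y: "Y0 * Y = Y"
    proof -
      have "mink_adj (Y * Y0) = mink_adj Y0 * mink_adj Y" by (simp add: adj_mult)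
      then show ?thesis using YY0 adjY adjY0 by simp
    qed
    have "vec_space.rank m Y0 \<le> vec_space.rank m Y" using crY crY0 unfolding crank_def by simp
    then obtain Z where Z: "Z \<in> carrier_mat m m" and Y0YZ: "Y0 = Y * Z"
      using rank_range_eq[OF Y0 Y Y0Y[symmetric]] by blast
    have "Y * Y0 = Y0"
    proof -
      have "Y * Y0 = (Y * Y) * Z" unfolding Y0YZ using assoc_mult_mat[OF Y Y Z] by simp
      then show ?thesis using YY Y0YZ by simp
    qed
    then show ?thesis using YY0 by simp
  qed
  show ?thesis using Y0 Y0A adjY0 Y0Y0 crY0 uniq unfolding Y0_def P_def by blast
qed

lemma block_rank:
  assumes A: "A \<in> carrier_mat m n" and Wi: "is_minkowski_inverse A W" and Z: "Z \<in> carrier_mat n m"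
  shows "crank (four_block_mat A (A * W) (W * A) Z) = crank A + crank (Z - W)"
proof -
  have W: "W \<in> carrier_mat n m" and AWA: "A * W * A = A" and WAW: "W * A * W = W"
    using Wi A unfolding is_minkowski_inverse_def by auto
  define D where "D = Z - W"
  have D: "D \<in> carrier_mat n m" unfolding D_def using minus_carrier_mat[OF W] .
  define M where "M = four_block_mat A (A * W) (W * A) Z"
  have AW: "A * W \<in> carrier_mat m m" and WA: "W * A \<in> carrier_mat n n" using A W by auto
  have M: "M \<in> carrier_mat (m + n) (n + m)" unfolding M_def by (rule four_block_carrier_mat[OF A Z])
  define k1 where "k1 = crank A"
  define k2 where "k2 = crank D"
  have cr1: "crank A = vec_space.rank m A" unfolding crank_def using A by simp
  have cr2: "crank D = vec_space.rank n D" unfolding crank_def using D by simp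
  obtain C1 G1 F1 where C1: "C1 \<in> carrier_mat m k1" and G1: "G1 \<in> carrier_mat n k1"
    and F1: "F1 \<in> carrier_mat k1 n" and C1AG: "C1 = A * G1" and AC1F: "A = C1 * F1" and inj1: "inj_mat C1"
    using rank_factor[OF A] unfolding k1_def cr1 by blast
  obtain C2 G2 F2 where C2: "C2 \<in> carrier_mat n k2" and G2: "G2 \<in> carrier_mat m k2"
    and F2: "F2 \<in> carrier_mat k2 m" and C2DG: "C2 = D * G2" and DC2F: "D = C2 * F2" and inj2: "inj_mat C2"
    using rank_factor[OF D] unfolding k2_def cr2 by blast
  have WC1: "W * C1 \<in> carrier_mat n k1" using W C1 by simp
  define K where "K = four_block_mat C1 (0\<^sub>m m k2) (W * C1) C2"
  have K: "K \<in> carrier_mat (m + n) (k1 + k2)" unfolding K_def by (rule four_block_carrier_mat[OF C1 C2])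
  define Fb where "Fb = four_block_mat F1 (F1 * W) (0\<^sub>m k2 n) F2"
  have F1W: "F1 * W \<in> carrier_mat k1 m" using F1 W by simp
  have Fb: "Fb \<in> carrier_mat (k1 + k2) (n + m)" unfolding Fb_def by (rule four_block_carrier_mat[OF F1 F2])
  have MKF: "M = K * Fb"
  proof -
    have "K * Fb = four_block_mat (C1 * F1 + 0\<^sub>m m k2 * 0\<^sub>m k2 n) (C1 * (F1 * W) + 0\<^sub>m m k2 * F2)
      (W * C1 * F1 + C2 * 0\<^sub>m k2 n) (W * C1 * (F1 * W) + C2 * F2)"
      unfolding K_def Fb_def
      by (rule mult_four_block_mat[OF C1 zero_carrier_mat WC1 C2 F1 F1W zero_carrier_mat F2])
    also have "C1 * F1 + 0\<^sub>m m k2 * 0\<^sub>m k2 n = A" using AC1F C1 F1 by simp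
    also have "C1 * (F1 * W) + 0\<^sub>m m k2 * F2 = A * W"
      using AC1F C1 F1 F2 W by (simp add: assoc_mult_mat[OF C1 F1 W])
    also have "W * C1 * F1 + C2 * 0\<^sub>m k2 n = W * A"
      using AC1F C1 F1 C2 W by (simp add: assoc_mult_mat[OF W C1 F1])
    also have "W * C1 * (F1 * W) + C2 * F2 = Z"
    proof -
      have "W * C1 * (F1 * W) = W * (C1 * F1) * W"
        by (simp add: assoc_dims carrier_matD[OF C1] carrier_matD[OF F1] carrier_matD[OF W])
      then have "W * C1 * (F1 * W) = W * A * W" using AC1F by simp
      then have "W * C1 * (F1 * W) = W" using WAW by simp
      then have "W * C1 * (F1 * W) + C2 * F2 = W + (Z - W)" using DC2F D_def by simp
      also have "\<dots> = Z" using W Z by (intro eq_matI) auto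
      finally show ?thesis .
    qed
    finally show ?thesis unfolding M_def by simp
  qed
  have up: "crank M \<le> k1 + k2" by (rule crank_le_factor[OF K Fb MKF])
  have WG2: "- (W * G2) \<in> carrier_mat n k2" using W G2 by simp
  define H where "H = four_block_mat G1 (- (W * G2)) (0\<^sub>m m k1) G2"
  have H: "H \<in> carrier_mat (n + m) (k1 + k2)" unfolding H_def by (rule four_block_carrier_mat[OF G1 G2])
  have KMH: "K = M * H"
  proof -
    have "M * H = four_block_mat (A * G1 + A * W * 0\<^sub>m m k1) (A * - (W * G2) + A * W * G2)
      (W * A * G1 + Z * 0\<^sub>m m k1) (W * A * - (W * G2) + Z * G2)"
      unfolding M_def H_def
      by (rule mult_four_block_mat[OF A AW WA Z G1 WG2 zero_carrier_mat G2])
    also have "A * G1 + A * W * 0\<^sub>m m k1 = C1" using C1AG A G1 W by simp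
    also have "A * - (W * G2) + A * W * G2 = 0\<^sub>m m k2"
    proof -
      have "A * W * G2 = A * (W * G2)" by (rule assoc_mult_mat[OF A W G2])
      moreover have "A * - (W * G2) = - (A * (W * G2))"
        by (rule uminus_mult_right_mat) (use A W in simp)
      ultimately show ?thesis using A W G2 by simp
    qed
    also have "W * A * G1 + Z * 0\<^sub>m m k1 = W * C1"
      using C1AG A G1 W Z by (simp add: assoc_mult_mat[OF W A G1])
    also have "W * A * - (W * G2) + Z * G2 = C2"
    proof -
      have e1: "W * A * - (W * G2) = - (W * A * (W * G2))"
        by (rule uminus_mult_right_mat) (use A W in simp)
      have e2: "W * A * (W * G2) = W * G2"
        using assoc_mult_mat[OF WA W G2] WAW by simp
      have "W * A * - (W * G2) + Z * G2 = - (W * G2) + Z * G2" using e1 e2 by simp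
      also have "\<dots> = Z * G2 - W * G2" using W Z G2 by (intro eq_matI) auto
      also have "\<dots> = (Z - W) * G2" by (rule minus_mult_distrib_mat[OF Z W G2, symmetric])
      finally show ?thesis using C2DG D_def by simp
    qed
    finally show ?thesis unfolding K_def by simp
  qed
  have injK: "inj_mat K"
    unfolding inj_mat_def
  proof (intro ballI impI)
    fix x assume x: "x \<in> carrier_vec (dim_col K)" and Kx: "K *\<^sub>v x = 0\<^sub>v (dim_row K)"
    have xc: "x \<in> carrier_vec (k1 + k2)" using x K by simp
    define a where "a = vec_first x k1"
    define d where "d = vec_last x k2"
    have a: "a \<in> carrier_vec k1" and d: "d \<in> carrier_vec k2" unfolding a_def d_def by simp_all
    have xad: "x = a @\<^sub>v d" unfolding a_def d_def using xc by simp
    have e: "K *\<^sub>v x = (C1 *\<^sub>v a + 0\<^sub>m m k2 *\<^sub>v d) @\<^sub>v (W * C1 *\<^sub>v a + C2 *\<^sub>v d)"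
      unfolding K_def xad by (rule four_block_mat_mult_vec[OF C1 _ WC1 C2 a d]) simp
    have c1: "C1 *\<^sub>v a + 0\<^sub>m m k2 *\<^sub>v d \<in> carrier_vec m" using C1 a d by simp
    have "K *\<^sub>v x = 0\<^sub>v m @\<^sub>v 0\<^sub>v n" using Kx K zero_append_vec[of m n] by simp
    then have "C1 *\<^sub>v a + 0\<^sub>m m k2 *\<^sub>v d = 0\<^sub>v m \<and> W * C1 *\<^sub>v a + C2 *\<^sub>v d = 0\<^sub>v n"
      using e append_vec_eq[OF c1, of "0\<^sub>v m"] by simp
    then have s1: "C1 *\<^sub>v a = 0\<^sub>v m" and s2: "W * C1 *\<^sub>v a + C2 *\<^sub>v d = 0\<^sub>v n"
      using C1 a d by auto
    have a0: "a = 0\<^sub>v k1" using inj1 a C1 s1 unfolding inj_mat_def by auto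
    have "W * C1 *\<^sub>v a = 0\<^sub>v n" unfolding a0 using WC1 by simp
    then have "C2 *\<^sub>v d = 0\<^sub>v n" using s2 C2 d by simp
    then have d0: "d = 0\<^sub>v k2" using inj2 d C2 unfolding inj_mat_def by auto
    show "x = 0\<^sub>v (dim_col K)" using xad a0 d0 K zero_append_vec[of k1 k2, symmetric] by simp
  qed
  have "k1 + k2 \<le> vec_space.rank (m + n) M" by (rule rank_lower[OF K injK M H KMH])
  then have "k1 + k2 \<le> crank M" unfolding crank_def using M by simp
  then show ?thesis using up unfolding M_def k1_def k2_def D_def by simp
qed

lemma crank_zero_imp: assumes M: "M \<in> carrier_mat n m" and r0: "crank M = 0"
  shows "M = 0\<^sub>m n m"
proof -
  have cr: "crank M = vec_space.rank n M" unfolding crank_def using M by simp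
  obtain C F where C: "C \<in> carrier_mat n 0" and F: "F \<in> carrier_mat 0 m" and MCF: "M = C * F"
    using rank_factor[OF M] unfolding cr[symmetric] r0 by blast
  show ?thesis unfolding MCF using C F by (intro eq_matI) (auto simp: scalar_prod_def)
qed

lemma one_minus_one_minus: "P \<in> carrier_mat k k \<Longrightarrow> 1\<^sub>m k - (1\<^sub>m k - P) = (P :: complex mat)"
  by (rule eq_matI) auto

theorem theorem7p5:
  fixes A :: "complex mat" and m n r :: nat
  assumes "0 < m" and "0 < n"
    and "A \<in> carrier_mat m n"
    and "crank A = r"
    and "crank (mink_adj A * A * mink_adj A) = crank A"
  shows "(\<exists>!X. X \<in> carrier_mat n n \<and> A * X = 0\<^sub>m m n \<and> mink_adj X = X \<and>
              X * X = X \<and> crank X = n - r)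
       \<and> (\<exists>!Y. Y \<in> carrier_mat m m \<and> Y * A = 0\<^sub>m m n \<and> mink_adj Y = Y \<and>
              Y * Y = Y \<and> crank Y = m - r)
       \<and> (\<forall>X Y. (X \<in> carrier_mat n n \<and> A * X = 0\<^sub>m m n \<and> mink_adj X = X \<and>
                   X * X = X \<and> crank X = n - r)
              \<longrightarrow> (Y \<in> carrier_mat m m \<and> Y * A = 0\<^sub>m m n \<and> mink_adj Y = Y \<and>
                   Y * Y = Y \<and> crank Y = m - r)
              \<longrightarrow> (\<exists>!Z. Z \<in> carrier_mat n m \<and>
                     crank (four_block_mat A (1\<^sub>m m - Y) (1\<^sub>m n - X) Z) = crank A)
                  \<and> is_minkowski_inverse A (minkowski_inverse A)
                  \<and> X = 1\<^sub>m n - minkowski_inverse A * A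
                  \<and> Y = 1\<^sub>m m - A * minkowski_inverse A
                  \<and> (\<forall>Z. Z \<in> carrier_mat n m \<and>
                     crank (four_block_mat A (1\<^sub>m m - Y) (1\<^sub>m n - X) Z) = crank A
                     \<longrightarrow> Z = minkowski_inverse A))"
proof -
  note A = assms(3)
  have rk: "crank (mink_adj A * A * mink_adj A) = crank A" using assms(5) .
  define W where "W = minkowski_inverse A"
  have hW: "is_minkowski_inverse A W" unfolding W_def by (rule mink_inv_props[OF A rk])
  have Wc: "W \<in> carrier_mat n m" using hW A unfolding is_minkowski_inverse_def by auto
  note XP = X_part[OF A hW] and YP = Y_part[OF A hW]
  have r: "crank A = r" using assms(4) .
  have part1: "\<exists>!X. X \<in> carrier_mat n n \<and> A * X = 0\<^sub>m m n \<and> mink_adj X = X \<and>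
              X * X = X \<and> crank X = n - r"
  proof (rule ex1I[of _ "1\<^sub>m n - W * A"])
    show "1\<^sub>m n - W * A \<in> carrier_mat n n \<and> A * (1\<^sub>m n - W * A) = 0\<^sub>m m n \<and>
      mink_adj (1\<^sub>m n - W * A) = 1\<^sub>m n - W * A \<and>
      (1\<^sub>m n - W * A) * (1\<^sub>m n - W * A) = 1\<^sub>m n - W * A \<and> crank (1\<^sub>m n - W * A) = n - r"
      using XP r by simp
  next
    fix X assume "X \<in> carrier_mat n n \<and> A * X = 0\<^sub>m m n \<and> mink_adj X = X \<and> X * X = X \<and> crank X = n - r"
    then show "X = 1\<^sub>m n - W * A" using XP r by blast
  qed
  have part2: "\<exists>!Y. Y \<in> carrier_mat m m \<and> Y * A = 0\<^sub>m m n \<and> mink_adj Y = Y \<and>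
              Y * Y = Y \<and> crank Y = m - r"
  proof (rule ex1I[of _ "1\<^sub>m m - A * W"])
    show "1\<^sub>m m - A * W \<in> carrier_mat m m \<and> (1\<^sub>m m - A * W) * A = 0\<^sub>m m n \<and>
      mink_adj (1\<^sub>m m - A * W) = 1\<^sub>m m - A * W \<and>
      (1\<^sub>m m - A * W) * (1\<^sub>m m - A * W) = 1\<^sub>m m - A * W \<and> crank (1\<^sub>m m - A * W) = m - r"
      using YP r by simp
  next
    fix Y assume "Y \<in> carrier_mat m m \<and> Y * A = 0\<^sub>m m n \<and> mink_adj Y = Y \<and> Y * Y = Y \<and> crank Y = m - r"
    then show "Y = 1\<^sub>m m - A * W" using YP r by blast
  qed
  have part3: "(\<exists>!Z. Z \<in> carrier_mat n m \<and>
                     crank (four_block_mat A (1\<^sub>m m - Y) (1\<^sub>m n - X) Z) = crank A)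
                  \<and> is_minkowski_inverse A (minkowski_inverse A)
                  \<and> X = 1\<^sub>m n - minkowski_inverse A * A
                  \<and> Y = 1\<^sub>m m - A * minkowski_inverse A
                  \<and> (\<forall>Z. Z \<in> carrier_mat n m \<and>
                     crank (four_block_mat A (1\<^sub>m m - Y) (1\<^sub>m n - X) Z) = crank A
                     \<longrightarrow> Z = minkowski_inverse A)"
    if hX: "X \<in> carrier_mat n n \<and> A * X = 0\<^sub>m m n \<and> mink_adj X = X \<and> X * X = X \<and> crank X = n - r"
    and hY: "Y \<in> carrier_mat m m \<and> Y * A = 0\<^sub>m m n \<and> mink_adj Y = Y \<and> Y * Y = Y \<and> crank Y = m - r"
    for X Y
  proof -
    have X: "X = 1\<^sub>m n - W * A" using hX XP r by blast
    have Y: "Y = 1\<^sub>m m - A * W" using hY YP r by blast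
    have AW: "A * W \<in> carrier_mat m m" and WA: "W * A \<in> carrier_mat n n" using A Wc by auto
    have 1: "1\<^sub>m m - Y = A * W" unfolding Y by (rule one_minus_one_minus[OF AW])
    have 2: "1\<^sub>m n - X = W * A" unfolding X by (rule one_minus_one_minus[OF WA])
    have br: "crank (four_block_mat A (1\<^sub>m m - Y) (1\<^sub>m n - X) Z) = crank A + crank (Z - W)"
      if Z: "Z \<in> carrier_mat n m" for Z
      unfolding 1 2 by (rule block_rank[OF A hW Z])
    have uq: "Z = W" if Z: "Z \<in> carrier_mat n m"
      and h: "crank (four_block_mat A (1\<^sub>m m - Y) (1\<^sub>m n - X) Z) = crank A" for Z
    proof -
      have "crank (Z - W) = 0" using br[OF Z] h by simp
      then have ZW: "Z - W = 0\<^sub>m n m" using crank_zero_imp[OF minus_carrier_mat[OF Wc]] by blast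
      show ?thesis
      proof (rule eq_matI)
        fix i j assume ij: "i < dim_row W" "j < dim_col W"
        have "(Z - W) $$ (i,j) = 0" using ZW ij Wc by simp
        then show "Z $$ (i,j) = W $$ (i,j)" using ij Z Wc by simp
      qed (use Z Wc in auto)
    qed
    have ex: "crank (four_block_mat A (1\<^sub>m m - Y) (1\<^sub>m n - X) W) = crank A"
    proof -
      have "W - W = 0\<^sub>m n m" using Wc by simp
      moreover have "crank (0\<^sub>m n m :: complex mat) = 0" unfolding crank_def using vec_space.rank_0I by simp
      ultimately show ?thesis using br[OF Wc] by simp
    qed
    have "\<exists>!Z. Z \<in> carrier_mat n m \<and> crank (four_block_mat A (1\<^sub>m m - Y) (1\<^sub>m n - X) Z) = crank A"
      using ex uq Wc by blast
    then show ?thesis using hW X Y uq unfolding W_def by blast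
  qed
  show ?thesis using part1 part2 part3 by blast
qed

end
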